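(* Let $K$ be the finite field of characteristic $p$ and order $q$, and let $d$ be an integer with $\gcd(d,q-1)=1$. Suppose that $\{W_{K,d}(a): a\in K^\times\}=\{0,A,-A\}$ is a set of exactly three values. Then $d\equiv 1\pmod{p-1}$ and $|A|=p^k$ for some positive integer $k$. Moreover, if $R$ denotes the set of roots in $K$ of the polynomial $(x+1)^d-x^d-1$, then $\sqrt{q}<\sqrt{|R|\,q}=|A|<q$.
   Context: $\psi_K(x)=\exp(2\pi i\,\mathrm{Tr}_{K/\mathbb{F}_p}(x)/p)$ is the canonical additive character of $K$, and for $a\in K$ the Weil sum is $W_{K,d}(a)=\sum_{x\in K}\psi_K(x^d+ax)$. *)

theory Defs
  imports "HOL-Analysis.Analysis" "HOL-Number_Theory.Cong"
begin

text \<open>K is modelled as a finite field type 'a; p = CHAR('a), q = CARD('a) = p^n.\<close>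

definition field_ext_degree :: "'a::{finite,field} itself \<Rightarrow> nat" where
  "field_ext_degree T = (THE n. CHAR('a) ^ n = CARD('a))"

definition abs_trace :: "'a::{finite,field} \<Rightarrow> 'a" where
  "abs_trace x = (\<Sum>i < field_ext_degree TYPE('a). x ^ (CHAR('a) ^ i))"

definition trace_nat :: "'a::{finite,field} \<Rightarrow> nat" where
  "trace_nat x = (THE m. m < CHAR('a) \<and> of_nat m = abs_trace x)"

definition add_char :: "'a::{finite,field} \<Rightarrow> complex" where
  "add_char x = exp (2 * pi * \<i> * of_nat (trace_nat x) / of_nat CHAR('a))"

definition weil_sum :: "nat \<Rightarrow> 'a::{finite,field} \<Rightarrow> complex" where
  "weil_sum d a = (\<Sum>x\<in>(UNIV::'a set). add_char (x ^ d + a * x))"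

end

theory Submission
  imports Defs "HOL-Computational_Algebra.Polynomial_Factorial" "HOL-Number_Theory.Residue_Primitive_Roots"
    "HOL-Number_Theory.Pocklington"
begin

lemma char_pos: "CHAR('a::{finite,field}) > 0"
  by (rule finite_imp_CHAR_pos) simp

lemma char_prime: "prime CHAR('a::{finite,field})"
  using prime_CHAR_semidom char_pos by blast

lemma char_gt1: "CHAR('a::{finite,field}) > 1"
  using char_prime prime_gt_1_nat by blast

lemma card_ge2: "CARD('a::{finite,field}) \<ge> 2"
proof -
  have "{0::'a, 1} \<subseteq> UNIV" by simp
  hence "card {0::'a,1} \<le> CARD('a)" by (intro card_mono) auto
  thus ?thesis by simp
qed

lemma pow_card: "(x::'a::{finite,field}) ^ CARD('a) = x"
proof (cases "x = 0")
  case False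
  have "x * (\<Prod>y\<in>UNIV-{0}. x * y) = x * x ^ (card (UNIV :: 'a set) - 1) * \<Prod>(UNIV-{0})"
    by (simp add: prod.distrib mult_ac)
  also have "x * x ^ (card (UNIV :: 'a set) - 1) = x ^ Suc (card (UNIV :: 'a set) - 1)"
    by (subst power_Suc) auto
  also have "Suc (card (UNIV :: 'a set) - 1) = card (UNIV :: 'a set)"
    using finite_UNIV_card_ge_0[where ?'a = 'a] by simp
  also have "(\<Prod>y\<in>UNIV-{0}. x * y) = (\<Prod>y\<in>UNIV-{0}. y)"
    by (rule prod.reindex_bij_witness[of _ "\<lambda>y. y / x" "\<lambda>y. x * y"]) (use False in auto)
  finally show ?thesis
    by simp
qed (use finite_UNIV_card_ge_0[where ?'a = 'a] in auto)

lemma pow_card_minus1: "(x::'a::{finite,field}) \<noteq> 0 \<Longrightarrow> x ^ (CARD('a) - 1) = 1"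
proof -
  assume x: "x \<noteq> 0"
  have "x * x ^ (CARD('a) - 1) = x * 1"
    using pow_card[of x] card_ge2[where 'a='a]
    by (metis Suc_diff_1 less_le_trans mult.right_neutral pos2 power_Suc)
  thus ?thesis using x by simp
qed

definition addsub :: "'a::{finite,field} set \<Rightarrow> bool" where
  "addsub V \<longleftrightarrow> 0 \<in> V \<and> (\<forall>x\<in>V. \<forall>y\<in>V. x + y \<in> V)"

lemma addsub_ofnat: "addsub V \<Longrightarrow> v \<in> V \<Longrightarrow> of_nat m * v \<in> V"
  by (induction m) (auto simp: addsub_def distrib_right)

lemma addsub_neg: "addsub (V::'a::{finite,field} set) \<Longrightarrow> v \<in> V \<Longrightarrow> -v \<in> V"
proof -
  assume V: "addsub V" "v \<in> V"
  have "of_nat (CHAR('a) - 1) * v + v = of_nat CHAR('a) * v"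
    using char_pos[where 'a='a] by (simp add: of_nat_diff distrib_right)
  hence "of_nat (CHAR('a) - 1) * v = -v" by (simp add: eq_neg_iff_add_eq_0)
  thus ?thesis using addsub_ofnat[OF V] by metis
qed

lemma ofnat_inverse: "\<exists>m'. inverse (of_nat m :: 'a::{finite,field}) = of_nat m'"
proof (cases "(of_nat m :: 'a) = 0")
  case True thus ?thesis by (intro exI[of _ 0]) simp
next
  case False
  let ?c = "of_nat m :: 'a"
  have "?c * ?c ^ (CARD('a) - 2) = 1"
    using pow_card_minus1[OF False] card_ge2[where 'a='a]
    by (metis Suc_diff_Suc Suc_1 diff_Suc_1 less_le_trans one_less_numeral_iff power_Suc semiring_norm(76) Suc_le_lessD)
  hence "inverse ?c = ?c ^ (CARD('a) - 2)"
    using False by (metis inverse_unique)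
  thus ?thesis by (metis of_nat_power)
qed

lemma addsub_grow:
  fixes V :: "'a::{finite,field} set"
  assumes V: "addsub V" and y: "y \<notin> V"
  defines "V' \<equiv> (\<lambda>(v,j). v + of_nat j * y) ` (V \<times> {..<CHAR('a)})"
  shows "addsub V'" "card V' = card V * CHAR('a)" "V \<subset> V'"
proof -
  let ?p = "CHAR('a)"
  have p: "?p > 1" by (rule char_gt1)
  show "addsub V'" unfolding addsub_def
  proof safe
    have "(0,0) \<in> V \<times> {..<?p}" using V p by (auto simp: addsub_def)
    hence "(\<lambda>(v,j). v + of_nat j * y) (0,0) \<in> V'" unfolding V'_def by (rule imageI)
    thus "0 \<in> V'" by simp
  next
    fix a b assume "a \<in> V'" "b \<in> V'"
    then obtain v1 j1 v2 j2 where a: "a = v1 + of_nat j1 * y" "v1 \<in> V"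
      and b: "b = v2 + of_nat j2 * y" "v2 \<in> V" unfolding V'_def by auto
    have "[j1 + j2 = (j1 + j2) mod ?p] (mod ?p)" by (simp add: cong_def)
    hence "(of_nat (j1 + j2) :: 'a) = of_nat ((j1 + j2) mod ?p)"
      by (simp only: of_nat_eq_iff_cong_CHAR)
    moreover have "a + b = (v1 + v2) + of_nat (j1 + j2) * y"
      by (simp add: a b algebra_simps)
    ultimately have "a + b = (v1 + v2) + of_nat ((j1 + j2) mod ?p) * y"
      by simp
    moreover have "v1 + v2 \<in> V" using V a b by (auto simp: addsub_def)
    moreover have "(j1 + j2) mod ?p < ?p" using p by simp
    ultimately show "a + b \<in> V'" unfolding V'_def by (auto simp: image_iff)
  qed
  have inj: "inj_on (\<lambda>(v,j). v + of_nat j * y) (V \<times> {..<?p})"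
  proof (rule inj_onI, clarsimp)
    fix v j v' j' assume vs: "v \<in> V" "v' \<in> V" "j < ?p" "j' < ?p"
      and eq: "v + of_nat j * y = v' + of_nat j' * y"
    show "v = v' \<and> j = j'"
    proof (cases "j = j'")
      case True thus ?thesis using eq by simp
    next
      case False
      define m where "m = j + (?p - j')"
      have cm: "(of_nat m :: 'a) = of_nat j - of_nat j'"
        using vs(4) by (simp add: m_def of_nat_diff)
      have "(of_nat m :: 'a) \<noteq> 0"
      proof
        assume "(of_nat m :: 'a) = 0"
        hence "(of_nat j :: 'a) = of_nat j'" using cm by simp
        hence "[j = j'] (mod ?p)" by (simp add: of_nat_eq_iff_cong_CHAR)
        thus False using vs False by (simp add: cong_def)
      qed
      obtain m' where m': "inverse (of_nat m :: 'a) = of_nat m'" using ofnat_inverse by blast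
      have e2: "v + of_nat j * y - (v + of_nat j' * y) = v' + of_nat j' * y - (v + of_nat j' * y)"
        using eq by simp
      have "of_nat m * y = of_nat j * y - of_nat j' * y" by (simp add: cm left_diff_distrib)
      also have "\<dots> = v' + - v" using e2 by (simp add: algebra_simps)
      finally have "of_nat m * y = v' + - v" .
      hence "y = of_nat m' * (v' + - v)" using \<open>(of_nat m :: 'a) \<noteq> 0\<close> m'
        by (metis inverse_mult_distrib mult.commute nonzero_divide_eq_eq divide_inverse mult.left_neutral right_inverse)
      moreover have "v' + - v \<in> V" using V vs addsub_neg[OF V vs(1)] by (auto simp: addsub_def)
      ultimately have "y \<in> V" using addsub_ofnat[OF V] by simp
      thus ?thesis using y by simp
    qed
  qed
  show "card V' = card V * ?p" unfolding V'_def
    by (subst card_image[OF inj]) (simp add: card_cartesian_product)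
  have "V \<subseteq> V'"
  proof
    fix x assume "x \<in> V"
    hence "(x,0) \<in> V \<times> {..<?p}" using p by auto
    hence "(\<lambda>(v,j). v + of_nat j * y) (x,0) \<in> V'" unfolding V'_def by (rule imageI)
    thus "x \<in> V'" by simp
  qed
  moreover have "y \<in> V'"
  proof -
    have "(0,1) \<in> V \<times> {..<?p}" using p V by (auto simp: addsub_def)
    hence "(\<lambda>(v,j). v + of_nat j * y) (0,1) \<in> V'" unfolding V'_def by (rule imageI)
    thus "y \<in> V'" by simp
  qed
  ultimately show "V \<subset> V'" using y by blast
qed

lemma card_char_power_aux:
  fixes V :: "'a::{finite,field} set"
  shows "addsub V \<Longrightarrow> card V = CHAR('a) ^ k \<Longrightarrow> \<exists>n. CARD('a) = CHAR('a) ^ n"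
proof (induction "CARD('a) - card V" arbitrary: V k rule: less_induct)
  case less
  show ?case
  proof (cases "V = UNIV")
    case True thus ?thesis using less by auto
  next
    case False
    then obtain y where y: "y \<notin> V" by auto
    define V' where "V' \<equiv> (\<lambda>(v,j). v + of_nat j * y) ` (V \<times> {..<CHAR('a)})"
    note g = addsub_grow[OF less(2) y, folded V'_def]
    have "card V < card V'" using g(3) by (simp add: psubset_card_mono)
    moreover have "card V' \<le> CARD('a)" by (simp add: card_mono)
    ultimately have "CARD('a) - card V' < CARD('a) - card V" by linarith
    thus ?thesis using less(1)[OF _ g(1), of "Suc k"] g(2) less(3) by (simp add: mult.commute)
  qed
qed

lemma card_char_power: "\<exists>n. CARD('a::{finite,field}) = CHAR('a) ^ n"
  by (rule card_char_power_aux[of "{0}" 0]) (auto simp: addsub_def)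

lemma ext_degree: "CARD('a::{finite,field}) = CHAR('a) ^ field_ext_degree TYPE('a)"
proof -
  obtain n where n: "CARD('a) = CHAR('a) ^ n" using card_char_power by blast
  have "field_ext_degree TYPE('a) = n" unfolding field_ext_degree_def
  proof (rule the_equality)
    show "CHAR('a) ^ n = CARD('a)" using n by simp
    fix m assume "CHAR('a) ^ m = CARD('a)"
    thus "m = n" using n char_gt1[where 'a='a] by (simp add: power_inject_exp)
  qed
  thus ?thesis using n by simp
qed

lemma ext_degree_pos: "field_ext_degree TYPE('a::{finite,field}) > 0"
  using ext_degree[where 'a='a] card_ge2[where 'a='a] by (metis gr0I power_0 numeral_le_one_iff semiring_norm(69))



definition zeta :: "nat \<Rightarrow> complex" where
  "zeta p = exp (2 * pi * \<i> / of_nat p)"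

lemma zeta_pow: "zeta p ^ m = exp (2 * pi * \<i> * of_nat m / of_nat p)"
proof -
  have "zeta p ^ m = exp (of_nat m * (2 * pi * \<i> / of_nat p))"
    unfolding zeta_def by (rule exp_of_nat_mult[symmetric])
  thus ?thesis by (simp add: field_simps)
qed

lemma zeta_pow_eq_1: assumes "p > 0" shows "zeta p ^ m = 1 \<longleftrightarrow> p dvd m"
proof -
  have "zeta p ^ m = exp (complex_of_real (2 * pi * m / p) * \<i>)"
    by (simp add: zeta_pow field_simps)
  also have "\<dots> = 1 \<longleftrightarrow> (\<exists>n::int. 2 * pi * m / p = of_int (2 * n) * pi)"
    by (subst exp_eq_1) simp
  also have "\<dots> \<longleftrightarrow> (\<exists>n::int. real m = of_int n * real p)"
  proof -
    have "\<And>n::int. (2 * pi * m / p = of_int (2 * n) * pi) \<longleftrightarrow> (real m = of_int n * real p)"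
      using assms pi_gt_zero by (auto simp: field_simps)
    thus ?thesis by simp
  qed
  also have "\<dots> \<longleftrightarrow> p dvd m"
  proof
    assume "\<exists>n::int. real m = of_int n * real p"
    then obtain n :: int where n: "real m = of_int n * real p" by blast
    hence "int m = n * int p" by (metis of_int_eq_iff of_int_mult of_int_of_nat_eq)
    hence "int p dvd int m" by simp
    thus "p dvd m" by simp
  next
    assume "p dvd m" then obtain k where "m = p * k" by blast
    thus "\<exists>n::int. real m = of_int n * real p" by (intro exI[of _ "int k"]) simp
  qed
  finally show ?thesis .
qed

lemma zeta_pow_mod: assumes "p > 0" shows "zeta p ^ m = zeta p ^ (m mod p)"
proof -
  have "zeta p ^ m = zeta p ^ (m div p * p + m mod p)" by simp
  also have "\<dots> = zeta p ^ (m div p * p) * zeta p ^ (m mod p)" by (rule power_add)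
  also have "zeta p ^ (m div p * p) = (zeta p ^ p) ^ (m div p)"
    by (simp add: power_mult[symmetric] mult.commute)
  finally have "zeta p ^ m = (zeta p ^ p) ^ (m div p) * zeta p ^ (m mod p)" .
  thus ?thesis using zeta_pow_eq_1[OF assms, of p] by simp
qed

lemma zeta_pow_cong: "p > 0 \<Longrightarrow> [a = b] (mod p) \<Longrightarrow> zeta p ^ a = zeta p ^ b"
  by (metis cong_def zeta_pow_mod)

lemma norm_zeta: "norm (zeta p) = 1"
  unfolding zeta_def by simp

lemma add_char_zeta: "add_char (x::'a::{finite,field}) = zeta CHAR('a) ^ trace_nat x"
  unfolding add_char_def zeta_pow ..

abbreviation "fdeg \<equiv> field_ext_degree"

lemma trace_add: "abs_trace (x + y :: 'a::{finite,field}) = abs_trace x + abs_trace y"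
  unfolding abs_trace_def
  by (simp add: freshmans_dream'[OF char_prime] sum.distrib)

lemma trace_pow_char: "abs_trace (x::'a::{finite,field}) ^ CHAR('a) = abs_trace x"
proof -
  let ?p = "CHAR('a)" and ?n = "fdeg TYPE('a)"
  define f where "f i = x ^ (?p ^ i)" for i
  have "abs_trace x ^ ?p = (\<Sum>i<?n. f i ^ ?p)"
    unfolding abs_trace_def f_def by (rule freshmans_dream_sum[OF char_prime refl])
  also have "\<dots> = (\<Sum>i<?n. f (Suc i))"
    by (simp add: f_def power_mult[symmetric] mult.commute)
  also have "\<dots> = (\<Sum>i<?n. f i)"
  proof -
    have "(\<Sum>i<Suc ?n. f i) = f 0 + (\<Sum>i<?n. f (Suc i))" by (rule sum.lessThan_Suc_shift)
    moreover have "(\<Sum>i<Suc ?n. f i) = (\<Sum>i<?n. f i) + f ?n" by simp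
    moreover have "f ?n = f 0" unfolding f_def using pow_card[of x] ext_degree[where 'a='a] by simp
    ultimately show ?thesis by (simp add: add.commute)
  qed
  finally show ?thesis unfolding abs_trace_def f_def .
qed

lemma ofnat_pow_char: "(of_nat m :: 'a::{finite,field}) ^ CHAR('a) = of_nat m"
proof (induction m)
  case 0 thus ?case using char_pos[where 'a='a] by simp
next
  case (Suc m)
  have "(of_nat (Suc m) :: 'a) ^ CHAR('a) = (of_nat m + 1) ^ CHAR('a)" by (simp add: add.commute)
  also have "\<dots> = of_nat m ^ CHAR('a) + 1 ^ CHAR('a)"
    by (rule freshmans_dream[OF char_prime refl])
  finally show ?case using Suc by (simp add: add.commute)
qed

lemma prime_field_roots:
  fixes y :: "'a::{finite,field}"
  assumes "y ^ CHAR('a) = y"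
  shows "\<exists>m<CHAR('a). y = of_nat m"
proof -
  let ?p = "CHAR('a)"
  define P :: "'a poly" where "P = Polynomial.monom 1 ?p + [:0,-1:]"
  have p1: "?p > 1" by (rule char_gt1)
  have degP: "degree P = ?p" unfolding P_def using p1
    by (subst degree_add_eq_left) (auto simp: degree_monom_eq)
  hence "P \<noteq> 0" using p1 by auto
  have polyP: "poly P z = z ^ ?p - z" for z unfolding P_def by (simp add: poly_monom)
  define S where "S = (of_nat ` {..<?p} :: 'a set)"
  have cardS: "card S = ?p" unfolding S_def
    by (subst card_image) (auto intro!: inj_onI simp: of_nat_eq_iff_cong_CHAR cong_def)
  have "S \<subseteq> {z. poly P z = 0}" unfolding S_def by (auto simp: polyP ofnat_pow_char)
  moreover have "card {z. poly P z = 0} \<le> ?p"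
    using card_poly_roots_bound[OF \<open>P \<noteq> 0\<close>] degP by simp
  moreover have "card S \<le> card {z. poly P z = 0}"
    using \<open>S \<subseteq> _\<close> by (intro card_mono) auto
  ultimately have "S = {z. poly P z = 0}"
    using cardS by (intro card_subset_eq) auto
  moreover have "y \<in> {z. poly P z = 0}" using assms by (simp add: polyP)
  ultimately show ?thesis unfolding S_def by auto
qed

lemma trace_nat_prop:
  fixes x :: "'a::{finite,field}"
  shows "trace_nat x < CHAR('a) \<and> of_nat (trace_nat x) = abs_trace x"
proof -
  obtain m where m: "m < CHAR('a)" "abs_trace x = of_nat m"
    using prime_field_roots[OF trace_pow_char[of x]] by blast
  show ?thesis unfolding trace_nat_def
  proof (rule theI[of _ m])
    show "m < CHAR('a) \<and> of_nat m = abs_trace x" using m by simp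
    fix m' assume "m' < CHAR('a) \<and> of_nat m' = abs_trace x"
    thus "m' = m" using m by (auto simp: of_nat_eq_iff_cong_CHAR cong_def)
  qed
qed

lemma trace_nonzero: "\<exists>x::'a::{finite,field}. abs_trace x \<noteq> 0"
proof (rule ccontr)
  assume "\<not> ?thesis"
  hence all0: "abs_trace x = 0" for x :: 'a by blast
  let ?p = "CHAR('a)" and ?n = "fdeg TYPE('a)"
  define T :: "'a poly" where "T = (\<Sum>i<?n. Polynomial.monom 1 (?p ^ i))"
  have n: "?n > 0" by (rule ext_degree_pos)
  have p1: "?p > 1" by (rule char_gt1)
  have polyT: "poly T x = abs_trace x" for x
    unfolding T_def abs_trace_def by (simp add: poly_sum poly_monom)
  have "Polynomial.coeff T (?p ^ (?n - 1)) = (\<Sum>i<?n. if ?p ^ (?n - 1) = ?p ^ i then 1 else 0)"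
    unfolding T_def by (simp add: coeff_sum coeff_monom eq_commute)
  also have "\<dots> = (\<Sum>i\<in>{?n - 1}. 1)"
    using n p1 by (intro sum.mono_neutral_cong_right) (auto simp: power_inject_exp)
  finally have "Polynomial.coeff T (?p ^ (?n - 1)) = 1" by simp
  hence "T \<noteq> 0" by auto
  have "degree T \<le> ?p ^ (?n - 1)" unfolding T_def
  proof (rule degree_sum_le)
    fix i assume "i \<in> {..<?n}"
    hence "?p ^ i \<le> ?p ^ (?n - 1)" using p1 by (intro power_increasing) auto
    thus "degree (Polynomial.monom (1::'a) (?p ^ i)) \<le> ?p ^ (?n - 1)" by (simp add: degree_monom_eq)
  qed simp
  moreover have "card {x. poly T x = 0} \<le> degree T" by (rule card_poly_roots_bound[OF \<open>T \<noteq> 0\<close>])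
  moreover have "{x. poly T x = 0} = UNIV" using all0 polyT by auto
  ultimately have "CARD('a) \<le> ?p ^ (?n - 1)" by simp
  moreover have "?p ^ (?n - 1) < ?p ^ ?n" using p1 n by (intro power_strict_increasing) auto
  ultimately show False using ext_degree[where 'a='a] by simp
qed

lemma trace_zero: "abs_trace (0::'a::{finite,field}) = 0"
  unfolding abs_trace_def using char_pos[where 'a='a] by (simp add: power_0_left)

lemma trace_nat_add:
  "[trace_nat (x + y :: 'a::{finite,field}) = trace_nat x + trace_nat y] (mod CHAR('a))"
proof -
  have "(of_nat (trace_nat (x + y)) :: 'a) = of_nat (trace_nat x + trace_nat y)"
    using trace_nat_prop[of "x+y"] trace_nat_prop[of x] trace_nat_prop[of y] trace_add[of x y]
    by simp
  thus ?thesis by (simp only: of_nat_eq_iff_cong_CHAR)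
qed

lemma psi_add: "add_char (x + y :: 'a::{finite,field}) = add_char x * add_char y"
  unfolding add_char_zeta
  using zeta_pow_cong[OF char_pos trace_nat_add] by (simp add: power_add)

lemma psi_zero: "add_char (0::'a::{finite,field}) = 1"
proof -
  have "trace_nat (0::'a) = 0"
    using trace_nat_prop[of "0::'a"] trace_zero[where 'a='a]
    by (auto simp: of_nat_eq_0_iff_char_dvd dest: dvd_imp_le)
  thus ?thesis by (simp add: add_char_zeta)
qed

lemma psi_norm: "norm (add_char (x::'a::{finite,field})) = 1"
  by (simp add: add_char_zeta norm_power norm_zeta)

lemma psi_neg: "add_char (- x :: 'a::{finite,field}) = cnj (add_char x)"
proof -
  have "add_char (-x) * add_char x = 1" by (simp flip: psi_add add: psi_zero)
  moreover have "cnj (add_char x) * add_char x = 1"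
    using psi_norm[of x] by (simp add: complex_norm_square[symmetric] mult.commute
        flip: complex_mult_cnj) 
  ultimately show ?thesis
    by (metis mult_cancel_right zero_neq_one mult_zero_left)
qed

lemma psi_nontrivial: "\<exists>y::'a::{finite,field}. add_char y \<noteq> 1"
proof -
  obtain y :: 'a where y: "abs_trace y \<noteq> 0" using trace_nonzero by blast
  have "\<not> CHAR('a) dvd trace_nat y"
    using trace_nat_prop[of y] y by (auto simp: of_nat_eq_0_iff_char_dvd dest: dvd_imp_le)
  hence "add_char y \<noteq> 1" unfolding add_char_zeta using zeta_pow_eq_1[OF char_pos[where 'a='a]] by simp
  thus ?thesis by blast
qed

lemma psi_sum: "(\<Sum>x\<in>UNIV. add_char (x::'a::{finite,field})) = 0"
proof -
  obtain y :: 'a where y: "add_char y \<noteq> 1" using psi_nontrivial by blast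
  have "(\<Sum>x\<in>UNIV. add_char (x::'a)) = (\<Sum>x\<in>UNIV. add_char (x + y))"
    by (rule sum.reindex_bij_witness[of _ "\<lambda>x. x + y" "\<lambda>x. x - y"]) auto
  also have "\<dots> = add_char y * (\<Sum>x\<in>UNIV. add_char (x::'a))"
    by (simp add: psi_add sum_distrib_left mult.commute)
  finally have "(1 - add_char y) * (\<Sum>x\<in>UNIV. add_char (x::'a)) = 0" by (simp add: algebra_simps)
  thus ?thesis using y by simp
qed

lemma psi_orth: "(\<Sum>x\<in>UNIV. add_char (a * x :: 'a::{finite,field})) =
    (if a = 0 then of_nat CARD('a) else 0)"
proof (cases "a = 0")
  case True thus ?thesis by (simp add: psi_zero)
next
  case False
  have "(\<Sum>x\<in>UNIV. add_char (a * x)) = (\<Sum>x\<in>UNIV. add_char (x::'a))"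
    by (rule sum.reindex_bij_witness[of _ "\<lambda>x. x / a" "\<lambda>x. a * x"]) (use False in auto)
  thus ?thesis using False psi_sum by simp
qed

lemma psi_ofnat_mult: "add_char (of_nat j * x :: 'a::{finite,field}) = add_char x ^ j"
proof (induction j)
  case (Suc j)
  have "of_nat (Suc j) * x = x + of_nat j * x" by (simp add: algebra_simps)
  thus ?case using Suc by (simp only: psi_add) simp
qed (simp add: psi_zero)



lemma pow_inj:
  assumes d: "d > 0" and cop: "coprime d (CARD('a::{finite,field}) - 1)"
  shows "inj (\<lambda>x::'a. x ^ d)"
proof (rule injI)
  fix x y :: 'a assume eq: "x ^ d = y ^ d"
  show "x = y"
  proof (cases "y = 0")
    case True thus ?thesis using eq d by (simp add: power_0_left)
  next
    case False
    hence x0: "x \<noteq> 0" using eq d by (metis power_eq_0_iff)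
    define z where "z = x / y"
    have z0: "z \<noteq> 0" using x0 False by (simp add: z_def)
    have zd: "z ^ d = 1" using eq False by (simp add: z_def power_divide)
    have zq: "z ^ (CARD('a) - 1) = 1" by (rule pow_card_minus1[OF z0])
    obtain u v where uv: "d * u = (CARD('a) - 1) * v + gcd d (CARD('a) - 1)"
      using bezout_nat[of d "CARD('a) - 1"] d by auto
    hence uv': "d * u = (CARD('a) - 1) * v + 1" using cop by simp
    have "z ^ (d * u) = 1" by (simp add: power_mult zd)
    also have "z ^ (d * u) = z"
    proof -
      have "z ^ (d * u) = (z ^ (CARD('a) - 1)) ^ v * z"
        by (simp only: uv' power_add power_mult power_one_right)
      thus ?thesis by (simp only: zq power_one mult_1_left)
    qed
    finally have "z = 1" .
    thus ?thesis using False by (simp add: z_def)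
  qed
qed

lemma pow_surj:
  assumes "d > 0" "coprime d (CARD('a::{finite,field}) - 1)"
  shows "surj (\<lambda>x::'a. x ^ d)"
  by (rule finite_UNIV_inj_surj[OF _ pow_inj[OF assms]]) simp

lemma sum_pow_reindex:
  assumes "d > 0" "coprime d (CARD('a::{finite,field}) - 1)"
  shows "(\<Sum>x\<in>UNIV. f (x ^ d :: 'a)) = (\<Sum>x\<in>UNIV. f x)"
proof -
  have "(\<Sum>x\<in>UNIV. f (x ^ d :: 'a)) = sum f ((\<lambda>x. x ^ d) ` UNIV)"
    by (subst sum.reindex[OF pow_inj[OF assms]]) (simp add: o_def)
  thus ?thesis using pow_surj[OF assms] by simp
qed

lemma sum_a_psi: "(\<Sum>a\<in>UNIV. add_char (a * u :: 'a::{finite,field})) =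
    (if u = 0 then of_nat CARD('a) else 0)"
  using psi_orth[of u] by (simp add: mult.commute)

definition Wc :: "nat \<Rightarrow> 'a::{finite,field} \<Rightarrow> 'a \<Rightarrow> complex" where
  "Wc d c a = (\<Sum>x\<in>UNIV. add_char (c * (x ^ d + a * x)))"

lemma Wc_1: "Wc d 1 a = weil_sum d a"
  by (simp add: Wc_def weil_sum_def)

lemma weil_0:
  assumes "d > 0" "coprime d (CARD('a::{finite,field}) - 1)"
  shows "weil_sum d (0::'a) = 0"
  unfolding weil_sum_def using sum_pow_reindex[OF assms, of add_char] psi_sum by simp

lemma moment1:
  assumes "d > 0"
  shows "(\<Sum>a\<in>UNIV. weil_sum d (a::'a::{finite,field})) = of_nat CARD('a)"
proof -
  have "(\<Sum>a\<in>UNIV. weil_sum d (a::'a)) =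
      (\<Sum>x\<in>UNIV. add_char (x ^ d) * (\<Sum>a\<in>UNIV. add_char (a * (x::'a))))"
  proof -
    have "(\<Sum>a\<in>UNIV. weil_sum d (a::'a)) = (\<Sum>a\<in>UNIV. \<Sum>x\<in>UNIV. add_char (x ^ d) * add_char (a * (x::'a)))"
      unfolding weil_sum_def by (simp add: psi_add)
    also have "\<dots> = (\<Sum>x\<in>UNIV. \<Sum>a\<in>UNIV. add_char (x ^ d) * add_char (a * (x::'a)))"
      by (rule sum.swap)
    also have "\<dots> = (\<Sum>x\<in>UNIV. add_char (x ^ d) * (\<Sum>a\<in>UNIV. add_char (a * (x::'a))))"
      by (simp add: sum_distrib_left)
    finally show ?thesis .
  qed
  also have "\<dots> = (\<Sum>x\<in>UNIV. if x = (0::'a) then of_nat CARD('a) else 0)"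
    using assms by (intro sum.cong refl) (simp add: sum_a_psi psi_zero zero_power)
  also have "\<dots> = of_nat CARD('a)" by simp
  finally show ?thesis .
qed

lemma moment_mixed:
  assumes "d > 0" "coprime d (CARD('a::{finite,field}) - 1)"
  shows "(\<Sum>a\<in>UNIV. weil_sum d (a::'a) * cnj (Wc d c a)) =
     (if c ^ d = c then of_nat CARD('a) ^ 2 else 0)"
proof -
  let ?q = "of_nat CARD('a) :: complex"
  have "(\<Sum>a\<in>UNIV. weil_sum d (a::'a) * cnj (Wc d c a)) =
     (\<Sum>a\<in>UNIV. \<Sum>x\<in>UNIV. \<Sum>y\<in>UNIV. add_char (x ^ d - c * y ^ d) * add_char (a * (x - c * y)))"
  proof (intro sum.cong refl)
    fix a :: 'a
    have "weil_sum d a * cnj (Wc d c a) =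
        (\<Sum>x\<in>UNIV. \<Sum>y\<in>UNIV. add_char (x ^ d + a * x) * cnj (add_char (c * (y ^ d + a * y))))"
      unfolding weil_sum_def Wc_def by (simp add: sum_product)
    also have "\<dots> = (\<Sum>x\<in>UNIV. \<Sum>y\<in>UNIV. add_char (x ^ d - c * y ^ d) * add_char (a * (x - c * y)))"
    proof (intro sum.cong refl)
      fix x y :: 'a
      have "add_char (x ^ d + a * x) * cnj (add_char (c * (y ^ d + a * y))) =
          add_char ((x ^ d + a * x) + - (c * (y ^ d + a * y)))"
        by (simp only: psi_neg[symmetric] psi_add[symmetric])
      also have "(x ^ d + a * x) + - (c * (y ^ d + a * y)) = (x ^ d - c * y ^ d) + a * (x - c * y)"
        by (simp add: algebra_simps)
      finally show "add_char (x ^ d + a * x) * cnj (add_char (c * (y ^ d + a * y))) =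
          add_char (x ^ d - c * y ^ d) * add_char (a * (x - c * y))" by (simp add: psi_add)
    qed
    finally show "weil_sum d a * cnj (Wc d c a) =
        (\<Sum>x\<in>UNIV. \<Sum>y\<in>UNIV. add_char (x ^ d - c * y ^ d) * add_char (a * (x - c * y)))" .
  qed
  also have "\<dots> = (\<Sum>x\<in>UNIV. \<Sum>y\<in>UNIV. add_char (x ^ d - c * y ^ d) *
       (\<Sum>a\<in>UNIV. add_char (a * (x - c * y))))"
    by (subst sum.swap, rule sum.cong[OF refl], subst sum.swap) (simp add: sum_distrib_left)
  also have "\<dots> = (\<Sum>y\<in>UNIV. \<Sum>x\<in>UNIV. add_char (x ^ d - c * y ^ d) * (if x = c * y then ?q else 0))"
    by (subst sum.swap) (simp add: sum_a_psi)
  also have "\<dots> = (\<Sum>y\<in>UNIV. add_char ((c * y) ^ d - c * y ^ d) * ?q)"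
  proof (rule sum.cong[OF refl])
    fix y :: 'a
    have "(\<Sum>x\<in>UNIV. add_char (x ^ d - c * y ^ d) * (if x = c * y then ?q else 0)) =
       (\<Sum>x\<in>UNIV. if x = c * y then add_char (x ^ d - c * y ^ d) * ?q else 0)"
      by (rule sum.cong) auto
    also have "\<dots> = add_char ((c * y) ^ d - c * y ^ d) * ?q"
      by (subst sum.delta) simp_all
    finally show "(\<Sum>x\<in>UNIV. add_char (x ^ d - c * y ^ d) * (if x = c * y then ?q else 0)) =
      add_char ((c * y) ^ d - c * y ^ d) * ?q" .
  qed
  also have "\<dots> = ?q * (\<Sum>y\<in>UNIV. add_char ((c ^ d - c) * y ^ d))"
    by (simp add: sum_distrib_left power_mult_distrib algebra_simps)
  also have "(\<Sum>y\<in>UNIV. add_char ((c ^ d - c) * y ^ d)) = (\<Sum>y\<in>UNIV. add_char ((c ^ d - c) * y))"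
    by (rule sum_pow_reindex[OF assms, of "\<lambda>y. add_char ((c ^ d - c) * y)"])
  also have "\<dots> = (if c ^ d = c then ?q else 0)" by (simp add: psi_orth)
  finally show ?thesis by (simp add: power2_eq_square)
qed

lemma moment2:
  assumes "d > 0" "coprime d (CARD('a::{finite,field}) - 1)"
  shows "(\<Sum>a\<in>UNIV. weil_sum d (a::'a) * cnj (weil_sum d a)) = of_nat CARD('a) ^ 2"
  using moment_mixed[OF assms, of 1] by (simp add: Wc_1)



lemma cube_sum: "(\<Sum>x\<in>A. g x) ^ 3 = (\<Sum>x\<in>A. \<Sum>y\<in>A. \<Sum>z\<in>A. g x * g y * (g z :: complex))"
proof -
  have "(\<Sum>x\<in>A. g x) ^ 3 = (\<Sum>x\<in>A. g x) * ((\<Sum>y\<in>A. g y) * (\<Sum>z\<in>A. g z))"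
    by (simp add: power3_eq_cube mult.assoc)
  also have "(\<Sum>y\<in>A. g y) * (\<Sum>z\<in>A. g z) = (\<Sum>y\<in>A. \<Sum>z\<in>A. g y * g z)" by (rule sum_product)
  also have "(\<Sum>x\<in>A. g x) * (\<Sum>y\<in>A. \<Sum>z\<in>A. g y * g z) = (\<Sum>x\<in>A. \<Sum>y\<in>A. g x * (\<Sum>z\<in>A. g y * g z))"
    by (rule sum_product)
  also have "\<dots> = (\<Sum>x\<in>A. \<Sum>y\<in>A. \<Sum>z\<in>A. g x * g y * g z)"
    by (simp add: sum_distrib_left mult.assoc)
  finally show ?thesis .
qed

lemma sum_scale:
  assumes "(s::'a::{finite,field}) \<noteq> 0"
  shows "(\<Sum>x\<in>UNIV. f (s * x)) = (\<Sum>x\<in>UNIV. f x)"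
  by (rule sum.reindex_bij_witness[of _ "\<lambda>x. x / s" "\<lambda>x. s * x"]) (use assms in auto)

definition FF :: "nat \<Rightarrow> 'a::{finite,field} \<Rightarrow> 'a \<Rightarrow> 'a" where
  "FF d x y = x ^ d + y ^ d + (- (x + y)) ^ d"

lemma moment3:
  "(\<Sum>a\<in>UNIV. weil_sum d (a::'a::{finite,field}) ^ 3) =
     of_nat CARD('a) * (\<Sum>x\<in>UNIV. \<Sum>y\<in>UNIV. add_char (FF d x (y::'a)))"
proof -
  let ?q = "of_nat CARD('a) :: complex"
  let ?P = "\<lambda>x y z::'a. add_char (x ^ d + y ^ d + z ^ d)"
  have "(\<Sum>a\<in>UNIV. weil_sum d (a::'a) ^ 3) =
     (\<Sum>a\<in>UNIV. \<Sum>x\<in>UNIV. \<Sum>y\<in>UNIV. \<Sum>z\<in>UNIV. ?P x y z * add_char (a * (x + y + z)))"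
  proof (rule sum.cong[OF refl])
    fix a :: 'a
    show "weil_sum d a ^ 3 =
       (\<Sum>x\<in>UNIV. \<Sum>y\<in>UNIV. \<Sum>z\<in>UNIV. ?P x y z * add_char (a * (x + y + z)))"
      unfolding weil_sum_def cube_sum
    proof (intro sum.cong refl)
      fix x y z :: 'a
      have "(x ^ d + a * x) + (y ^ d + a * y) + (z ^ d + a * z) =
          (x ^ d + y ^ d + z ^ d) + a * (x + y + z)" by (simp add: algebra_simps)
      thus "add_char (x ^ d + a * x) * add_char (y ^ d + a * y) * add_char (z ^ d + a * z) =
          ?P x y z * add_char (a * (x + y + z))"
        by (metis psi_add)
    qed
  qed
  also have "\<dots> = (\<Sum>x\<in>UNIV. \<Sum>a\<in>UNIV. \<Sum>y\<in>UNIV. \<Sum>z\<in>UNIV. ?P x y z * add_char (a * (x + y + z)))"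
    by (rule sum.swap)
  also have "\<dots> = (\<Sum>x\<in>UNIV. \<Sum>y\<in>UNIV. \<Sum>a\<in>UNIV. \<Sum>z\<in>UNIV. ?P x y z * add_char (a * (x + y + z)))"
    by (rule sum.cong[OF refl], rule sum.swap)
  also have "\<dots> = (\<Sum>x\<in>UNIV. \<Sum>y\<in>UNIV. \<Sum>z\<in>UNIV. \<Sum>a\<in>UNIV. ?P x y z * add_char (a * (x + y + z)))"
    by (rule sum.cong[OF refl], rule sum.cong[OF refl], rule sum.swap)
  also have "\<dots> = (\<Sum>x\<in>UNIV. \<Sum>y\<in>UNIV. \<Sum>z\<in>UNIV. ?P x y z * (if z = - (x + y) then ?q else 0))"
  proof (intro sum.cong refl)
    fix x y z :: 'a
    have "(\<Sum>a\<in>UNIV. ?P x y z * add_char (a * (x + y + z))) = ?P x y z * (\<Sum>a\<in>UNIV. add_char (a * (x + y + z)))"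
      by (simp add: sum_distrib_left)
    also have "\<dots> = ?P x y z * (if z = - (x + y) then ?q else 0)"
      by (simp add: sum_a_psi add_eq_0_iff2 add.commute)
    finally show "(\<Sum>a\<in>UNIV. ?P x y z * add_char (a * (x + y + z))) = ?P x y z * (if z = - (x + y) then ?q else 0)" .
  qed
  also have "\<dots> = (\<Sum>x\<in>UNIV. \<Sum>y\<in>UNIV. ?q * add_char (FF d x (y::'a)))"
  proof (intro sum.cong refl)
    fix x y :: 'a
    have "(\<Sum>z\<in>UNIV. ?P x y z * (if z = - (x + y) then ?q else 0)) =
        (\<Sum>z\<in>UNIV. if z = - (x + y) then ?P x y z * ?q else 0)"
      by (rule sum.cong) auto
    also have "\<dots> = ?P x y (- (x + y)) * ?q" by (subst sum.delta) simp_all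
    finally show "(\<Sum>z\<in>UNIV. ?P x y z * (if z = - (x + y) then ?q else 0)) = ?q * add_char (FF d x y)"
      by (simp add: FF_def mult.commute)
  qed
  also have "\<dots> = ?q * (\<Sum>x\<in>UNIV. \<Sum>y\<in>UNIV. add_char (FF d x (y::'a)))"
    by (simp add: sum_distrib_left)
  finally show ?thesis .
qed

lemma FF_scale: "FF d (s * x) (s * y) = s ^ d * FF d x y"
proof -
  have e: "- (s * x + s * y) = s * (- (x + y))" by (simp add: algebra_simps)
  show ?thesis unfolding FF_def e power_mult_distrib by (simp add: algebra_simps)
qed

lemma FF_scale_sum:
  assumes d: "d > 0" "coprime d (CARD('a::{finite,field}) - 1)" and c: "(c::'a) \<noteq> 0"
  shows "(\<Sum>x\<in>UNIV. \<Sum>y\<in>UNIV. add_char (c * FF d x y)) = (\<Sum>x\<in>UNIV. \<Sum>y\<in>UNIV. add_char (FF d x (y::'a)))"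
proof -
  have "c \<in> range (\<lambda>x::'a. x ^ d)" using pow_surj[OF d] by simp
  then obtain s :: 'a where s: "s ^ d = c" by auto
  have s0: "s \<noteq> 0" using s c d by (auto simp: power_0_left)
  have "(\<Sum>x\<in>UNIV. \<Sum>y\<in>UNIV. add_char (c * FF d x y)) =
      (\<Sum>x\<in>UNIV. \<Sum>y\<in>UNIV. add_char (FF d (s * x) (s * y)))"
    by (simp add: FF_scale s)
  also have "\<dots> = (\<Sum>x\<in>UNIV. \<Sum>y\<in>UNIV. add_char (FF d x (s * y)))"
    by (rule sum_scale[OF s0, of "\<lambda>x. \<Sum>y\<in>UNIV. add_char (FF d x (s * y))"])
  also have "\<dots> = (\<Sum>x\<in>UNIV. \<Sum>y\<in>UNIV. add_char (FF d x (y::'a)))"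
  proof (rule sum.cong[OF refl])
    fix x :: 'a
    show "(\<Sum>y\<in>UNIV. add_char (FF d x (s * y))) = (\<Sum>y\<in>UNIV. add_char (FF d x y))"
      by (rule sum_scale[OF s0, of "\<lambda>y. add_char (FF d x y)"])
  qed
  finally show ?thesis .
qed

lemma sum_indicator_card:
  fixes P :: "'a::finite \<Rightarrow> 'b::finite \<Rightarrow> bool"
  shows "(\<Sum>x\<in>UNIV. \<Sum>y\<in>UNIV. if P x y then (c::complex) else 0) = of_nat (card {(x,y). P x y}) * c"
proof -
  have "(\<Sum>x\<in>UNIV. \<Sum>y\<in>UNIV. if P x y then c else 0) = (\<Sum>z\<in>UNIV \<times> UNIV. if P (fst z) (snd z) then c else 0)"
    by (simp add: sum.cartesian_product case_prod_beta)
  also have "\<dots> = (\<Sum>z\<in>UNIV \<inter> {(x,y). P x y}. c)"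
    by (subst sum.inter_restrict) (auto intro!: sum.cong simp: case_prod_beta)
  also have "UNIV \<inter> {(x,y). P x y} = {(x,y). P x y}" by auto
  finally show ?thesis by simp
qed

lemma count_relation:
  assumes d: "d > 0" "coprime d (CARD('a::{finite,field}) - 1)"
  shows "of_nat CARD('a) * of_nat (card {(x,y). FF d x y = (0::'a)}) =
      of_nat CARD('a) ^ 2 + of_nat (CARD('a) - 1) * (\<Sum>x\<in>UNIV. \<Sum>y\<in>UNIV. add_char (FF d x (y::'a)))"
proof -
  let ?q = "of_nat CARD('a) :: complex"
  let ?T = "(\<Sum>x\<in>UNIV. \<Sum>y\<in>UNIV. add_char (FF d x (y::'a)))"
  define G where "G c = (\<Sum>x\<in>UNIV. \<Sum>y\<in>UNIV. add_char (c * FF d x (y::'a)))" for c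
  have "(\<Sum>c\<in>UNIV. G c) = (\<Sum>x\<in>UNIV. \<Sum>y\<in>UNIV. \<Sum>c\<in>UNIV. add_char (c * FF d x (y::'a)))"
    unfolding G_def by (subst sum.swap, rule sum.cong[OF refl], rule sum.swap)
  also have "\<dots> = (\<Sum>x\<in>UNIV. \<Sum>y\<in>UNIV. if FF d x (y::'a) = 0 then ?q else 0)"
    by (simp add: sum_a_psi)
  also have "\<dots> = of_nat (card {(x,y). FF d x y = (0::'a)}) * ?q"
    by (rule sum_indicator_card)
  finally have 1: "(\<Sum>c\<in>UNIV. G c) = of_nat (card {(x,y). FF d x y = (0::'a)}) * ?q" .
  have "(\<Sum>c\<in>UNIV. G c) = G 0 + (\<Sum>c\<in>UNIV - {0}. G c)"
    by (simp add: sum.remove)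
  also have "G 0 = ?q * ?q" unfolding G_def by (simp add: psi_zero)
  also have "(\<Sum>c\<in>UNIV - {0}. G c) = (\<Sum>c\<in>UNIV - {0::'a}. ?T)"
    unfolding G_def by (rule sum.cong[OF refl]) (use FF_scale_sum[OF d] in auto)
  also have "\<dots> = of_nat (CARD('a) - 1) * ?T"
    by (simp add: card_Diff_subset)
  finally show ?thesis using 1 by (simp add: power2_eq_square mult.commute)
qed



definition RR :: "nat \<Rightarrow> 'a::{finite,field} set" where
  "RR d = {x. (x + 1) ^ d - x ^ d - 1 = 0}"

lemma FF_alt:
  assumes "(-1::'a::{finite,field}) ^ d = -1"
  shows "FF d (x::'a) y = x ^ d + y ^ d - (x + y) ^ d"
proof -
  have "(- (x + y)) ^ d = (-1) ^ d * (x + y) ^ d"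
    by (metis mult_minus1 power_mult_distrib)
  also have "\<dots> = - ((x + y) ^ d)" by (simp only: assms mult_minus1)
  finally show ?thesis unfolding FF_def by simp
qed

lemma FF_line:
  assumes "(-1::'a::{finite,field}) ^ d = -1"
  shows "FF d (x::'a) (x * t) = - (x ^ d * ((t + 1) ^ d - t ^ d - 1))"
proof -
  have e: "x + x * t = x * (t + 1)" by (simp add: algebra_simps)
  show ?thesis unfolding FF_alt[OF assms] e power_mult_distrib by (simp add: algebra_simps)
qed

lemma card_FF:
  assumes d: "d > 0" and hneg: "(-1::'a::{finite,field}) ^ d = -1"
  shows "card {(x,y). FF d x y = (0::'a)} = CARD('a) + (CARD('a) - 1) * card (RR d :: 'a set)"
proof -
  define A :: "('a \<times> 'a) set" where "A = {0} \<times> UNIV"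
  define B :: "('a \<times> 'a) set" where "B = (\<lambda>(x,t). (x, x * t)) ` ((UNIV - {0}) \<times> RR d)"
  have Z: "{(x,y). FF d x y = (0::'a)} = A \<union> B"
  proof (intro equalityI subsetI)
    fix z assume "z \<in> {(x,y). FF d x y = (0::'a)}"
    then obtain x y where z: "z = (x,y)" and F: "FF d x y = 0" by auto
    show "z \<in> A \<union> B"
    proof (cases "x = 0")
      case True thus ?thesis by (simp add: z A_def)
    next
      case False
      define t where "t = y / x"
      have y: "y = x * t" using False by (simp add: t_def)
      have "x ^ d * ((t + 1) ^ d - t ^ d - 1) = 0" using F FF_line[OF hneg, of x t] y by simp
      hence "t \<in> RR d" using False by (simp add: RR_def)
      hence "(x,t) \<in> (UNIV - {0}) \<times> RR d" using False by simp
      hence "(\<lambda>(x,t). (x, x * t)) (x,t) \<in> B" unfolding B_def by (rule imageI)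
      thus ?thesis by (simp add: z y)
    qed
  next
    fix z assume "z \<in> A \<union> B"
    thus "z \<in> {(x,y). FF d x y = (0::'a)}"
    proof
      assume "z \<in> A"
      then obtain y where "z = (0, y)" by (auto simp: A_def)
      thus ?thesis using d by (simp add: FF_alt[OF hneg] power_0_left)
    next
      assume "z \<in> B"
      then obtain x t where "z = (x, x * t)" "t \<in> RR d" by (auto simp: B_def)
      thus ?thesis by (simp add: FF_line[OF hneg] RR_def)
    qed
  qed
  have disj: "A \<inter> B = {}" by (auto simp: A_def B_def)
  have cA: "card A = CARD('a)" by (simp add: A_def card_cartesian_product)
  have inj: "inj_on (\<lambda>(x,t). (x, x * t)) ((UNIV - {0}) \<times> RR d)"
    by (rule inj_onI) auto
  have cB: "card B = (CARD('a) - 1) * card (RR d :: 'a set)"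
    unfolding B_def by (simp add: card_image[OF inj] card_cartesian_product card_Diff_subset)
  show ?thesis unfolding Z using disj cA cB by (simp add: card_Un_disjoint)
qed

lemma T_value:
  assumes d: "d > 0" "coprime d (CARD('a::{finite,field}) - 1)" and hneg: "(-1::'a) ^ d = -1"
  shows "(\<Sum>x\<in>UNIV. \<Sum>y\<in>UNIV. add_char (FF d x (y::'a))) = of_nat CARD('a) * of_nat (card (RR d :: 'a set))"
proof -
  let ?q = "of_nat CARD('a) :: complex" and ?r = "of_nat (card (RR d :: 'a set)) :: complex"
  let ?T = "(\<Sum>x\<in>UNIV. \<Sum>y\<in>UNIV. add_char (FF d x (y::'a)))"
  have q2: "CARD('a) \<ge> 2" by (rule card_ge2)
  have "?q * (?q + of_nat (CARD('a) - 1) * ?r) = ?q ^ 2 + of_nat (CARD('a) - 1) * ?T"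
    using count_relation[OF d] card_FF[OF d(1) hneg] by simp
  hence "of_nat (CARD('a) - 1) * (?q * ?r) = of_nat (CARD('a) - 1) * ?T"
    by (simp add: algebra_simps power2_eq_square)
  moreover have "(of_nat (CARD('a) - 1) :: complex) \<noteq> 0" using q2 by simp
  ultimately show ?thesis by simp
qed

lemma moment3_value:
  assumes d: "d > 0" "coprime d (CARD('a::{finite,field}) - 1)" and hneg: "(-1::'a) ^ d = -1"
  shows "(\<Sum>a\<in>UNIV. weil_sum d (a::'a) ^ 3) = of_nat CARD('a) ^ 2 * of_nat (card (RR d :: 'a set))"
  using moment3[of d, where 'a='a] T_value[OF d hneg] by (simp add: power2_eq_square)

lemma RR_card_ge2:
  assumes d: "d > 0" and hneg: "(-1::'a::{finite,field}) ^ d = -1"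
  shows "card (RR d :: 'a set) \<ge> 2"
proof -
  have "(-1::'a) \<in> RR d" unfolding RR_def mem_Collect_eq by (subst hneg) (simp add: power_0_left d)
  hence "{0, -1} \<subseteq> (RR d :: 'a set)" using d by (auto simp: RR_def power_0_left)
  moreover have "(0::'a) \<noteq> -1" by simp
  ultimately have "card {0::'a, -1} \<le> card (RR d :: 'a set)" by (intro card_mono) auto
  thus ?thesis by simp
qed



definition Psi :: "nat \<Rightarrow> int poly" where
  "Psi p = (\<Sum>k<p. Polynomial.monom (int (p choose Suc k)) k)"

lemma coeff_Psi: "Polynomial.coeff (Psi p) k = (if k < p then int (p choose Suc k) else 0)"
  unfolding Psi_def by (simp add: coeff_sum coeff_monom)

context
  fixes p :: nat
  assumes p: "prime p"
begin

lemma p2: "p \<ge> 2" using p prime_ge_2_nat by blast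

lemma degree_Psi: "degree (Psi p) = p - 1"
proof (rule antisym)
  show "degree (Psi p) \<le> p - 1" by (rule degree_le) (auto simp: coeff_Psi)
  have "Polynomial.coeff (Psi p) (p - 1) = 1" using p2 by (simp add: coeff_Psi)
  thus "p - 1 \<le> degree (Psi p)" by (intro le_degree) simp
qed

lemma lead_Psi: "lead_coeff (Psi p) = 1"
  using p2 by (simp add: degree_Psi coeff_Psi)

lemma Psi_nz: "Psi p \<noteq> 0" using lead_Psi by auto

lemma coeff_Psi_dvd: "k < p - 1 \<Longrightarrow> int p dvd Polynomial.coeff (Psi p) k"
  using dvd_choose_prime[of "Suc k" p] p p2 by (simp add: coeff_Psi)

lemma coeff_Psi_0: "Polynomial.coeff (Psi p) 0 = int p"
  using p2 by (simp add: coeff_Psi)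

lemma eisenstein_step:
  fixes a b :: "int poly"
  assumes ab: "Psi p = a * b" and da: "degree a > 0" and db: "degree b > 0"
  shows False
proof -
  let ?P = "int p"
  have pP: "prime ?P" using p by simp
  have a0: "a \<noteq> 0" and b0: "b \<noteq> 0" using ab Psi_nz by auto
  have "lead_coeff a * lead_coeff b = 1" using ab lead_Psi by (simp add: lead_coeff_mult)
  moreover have n1: "\<not> ?P dvd 1" using p2 by (auto dest: zdvd_imp_le)
  ultimately have la: "\<not> ?P dvd lead_coeff a" and lb: "\<not> ?P dvd lead_coeff b"
    by (metis dvd_mult2, metis dvd_mult)
  define r where "r = (LEAST i. \<not> ?P dvd Polynomial.coeff a i)"
  define s where "s = (LEAST i. \<not> ?P dvd Polynomial.coeff b i)"
  have r: "\<not> ?P dvd Polynomial.coeff a r" unfolding r_def by (rule LeastI[of _ "degree a"]) (use la in auto)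
  have s: "\<not> ?P dvd Polynomial.coeff b s" unfolding s_def by (rule LeastI[of _ "degree b"]) (use lb in auto)
  have r_le: "r \<le> degree a" unfolding r_def by (rule Least_le) (use la in auto)
  have s_le: "s \<le> degree b" unfolding s_def by (rule Least_le) (use lb in auto)
  have below_r: "i < r \<Longrightarrow> ?P dvd Polynomial.coeff a i" for i
    using not_less_Least[of i "\<lambda>i. \<not> ?P dvd Polynomial.coeff a i"] unfolding r_def by blast
  have below_s: "i < s \<Longrightarrow> ?P dvd Polynomial.coeff b i" for i
    using not_less_Least[of i "\<lambda>i. \<not> ?P dvd Polynomial.coeff b i"] unfolding s_def by blast
  have deg: "degree a + degree b = p - 1" using ab a0 b0 degree_Psi by (simp add: degree_mult_eq)
  have cm: "Polynomial.coeff (Psi p) (r + s) =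
      Polynomial.coeff a r * Polynomial.coeff b s +
      (\<Sum>i\<in>{..r+s} - {r}. Polynomial.coeff a i * Polynomial.coeff b (r + s - i))"
    unfolding ab coeff_mult by (subst sum.remove[of _ r]) auto
  have "?P dvd (\<Sum>i\<in>{..r+s} - {r}. Polynomial.coeff a i * Polynomial.coeff b (r + s - i))"
  proof (rule dvd_sum)
    fix i assume i: "i \<in> {..r+s} - {r}"
    show "?P dvd Polynomial.coeff a i * Polynomial.coeff b (r + s - i)"
    proof (cases "i < r")
      case True thus ?thesis using below_r by simp
    next
      case False
      hence "r + s - i < s" using i by auto
      thus ?thesis using below_s by simp
    qed
  qed
  moreover have "\<not> ?P dvd Polynomial.coeff a r * Polynomial.coeff b s"
    using r s pP by (simp add: prime_dvd_mult_iff)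
  ultimately have nd: "\<not> ?P dvd Polynomial.coeff (Psi p) (r + s)"
    using cm by (metis dvd_add_left_iff)
  have "r + s \<ge> p - 1" using coeff_Psi_dvd nd by (meson not_le)
  hence rr: "r = degree a" and ss: "s = degree b" using deg r_le s_le by linarith+
  have "?P dvd Polynomial.coeff a 0" using below_r da rr by simp
  moreover have "?P dvd Polynomial.coeff b 0" using below_s db ss by simp
  ultimately have "?P * ?P dvd Polynomial.coeff a 0 * Polynomial.coeff b 0" by (rule mult_dvd_mono)
  moreover have "Polynomial.coeff a 0 * Polynomial.coeff b 0 = ?P"
    using coeff_Psi_0 ab by (simp add: coeff_mult)
  ultimately have "?P * ?P dvd ?P * 1" by simp
  hence "?P dvd 1" using p2 by (subst (asm) dvd_mult_cancel_left) auto
  thus False using n1 by simp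
qed

lemma irreducible_Psi: "irreducible (Psi p)"
proof (rule irreducibleI)
  show "Psi p \<noteq> 0" by (rule Psi_nz)
  show "\<not> is_unit (Psi p)" using degree_Psi p2 by (auto simp: is_unit_poly_iff)
  fix a b assume ab: "Psi p = a * b"
  show "is_unit a \<or> is_unit b"
  proof (cases "degree a = 0")
    case True
    then obtain c where c: "a = [:c:]" by (metis degree_eq_zeroE)
    have "lead_coeff a * lead_coeff b = 1" using ab lead_Psi by (simp add: lead_coeff_mult)
    hence "c dvd 1" using c by (metis dvdI lead_coeff_pCons(2) pCons_0_0 mult.commute)
    thus ?thesis using c by (simp add: is_unit_const_poly_iff)
  next
    case False
    show ?thesis
    proof (cases "degree b = 0")
      case True
      then obtain c where c: "b = [:c:]" by (metis degree_eq_zeroE)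
      have "lead_coeff a * lead_coeff b = 1" using ab lead_Psi by (simp add: lead_coeff_mult)
      hence "c dvd 1" using c by (metis dvd_triv_right lead_coeff_pCons(2) pCons_0_0)
      thus ?thesis using c by (simp add: is_unit_const_poly_iff)
    next
      case False2: False
      thus ?thesis using eisenstein_step[OF ab] False by simp
    qed
  qed
qed

lemma prime_Psi: "prime_elem (Psi p)"
  by (rule irreducible_imp_prime_poly[OF irreducible_Psi])

end


abbreviation cmap :: "int poly \<Rightarrow> complex poly" where
  "cmap \<equiv> map_poly of_int"

lemma cmap_add: "cmap (f + g) = cmap f + cmap g"
  by (intro poly_eqI) (simp add: coeff_map_poly)

lemma cmap_mult: "cmap (f * g) = cmap f * cmap g"
  by (intro poly_eqI) (simp add: coeff_map_poly coeff_mult)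

lemma cmap_const: "cmap [:c:] = [:of_int c:]"
  by (intro poly_eqI) (simp add: coeff_map_poly coeff_pCons split: nat.splits)

lemma cmap_pCons: "cmap (pCons a f) = pCons (of_int a) (cmap f)"
  by (rule map_poly_pCons) simp

lemma cmap_pcompose: "cmap (pcompose f g) = pcompose (cmap f) (cmap g)"
  by (induction f) (simp_all add: pcompose_pCons cmap_add cmap_mult cmap_const cmap_pCons)

lemma cmap_smult: "cmap (Polynomial.smult a f) = Polynomial.smult (of_int a) (cmap f)"
  by (rule map_poly_smult) simp_all

context
  fixes p :: nat
  assumes p: "prime p"
begin

definition eta :: complex where "eta = zeta p - 1"

lemma zeta_p: "zeta p ^ p = 1"
  using zeta_pow_eq_1[of p p] p2[OF p] by simp

lemma zeta_ne1: "zeta p \<noteq> 1"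
  using zeta_pow_eq_1[of p 1] p2[OF p] by simp

lemma eval_Psi: "poly (cmap (Psi p)) eta = 0"
proof -
  have cm: "cmap (Psi p) = (\<Sum>k<p. Polynomial.monom (of_nat (p choose Suc k)) k)"
    by (intro poly_eqI) (simp add: coeff_map_poly coeff_Psi coeff_sum coeff_monom)
  have ev: "poly (cmap (Psi p)) eta = (\<Sum>k<p. of_nat (p choose Suc k) * eta ^ k)"
    unfolding cm by (simp add: poly_sum poly_monom)
  have "eta * poly (cmap (Psi p)) eta = (\<Sum>k<p. of_nat (p choose Suc k) * eta ^ Suc k)"
    unfolding ev by (simp add: sum_distrib_left algebra_simps)
  also have "\<dots> = (\<Sum>k<Suc p. of_nat (p choose k) * eta ^ k * 1 ^ (p - k)) - 1"
    by (subst sum.lessThan_Suc_shift) simp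
  also have "(\<Sum>k<Suc p. of_nat (p choose k) * eta ^ k * 1 ^ (p - k)) = (eta + 1) ^ p"
    by (subst binomial_ring) (simp add: lessThan_Suc_atMost)
  also have "(eta + 1) ^ p = 1" by (simp add: eta_def zeta_p)
  finally have "eta * poly (cmap (Psi p)) eta = 0" by simp
  moreover have "eta \<noteq> 0" using zeta_ne1 by (simp add: eta_def)
  ultimately show ?thesis by simp
qed

lemma LI_core:
  assumes G0: "G \<noteq> 0" and ev: "poly (cmap G) eta = 0"
  shows "degree G \<ge> p - 1"
proof -
  define S where "S = {G :: int poly. G \<noteq> 0 \<and> poly (cmap G) eta = 0}"
  define m where "m = (LEAST k. \<exists>H\<in>S. degree H = k)"
  have ex: "\<exists>H\<in>S. degree H = degree G" using G0 ev by (auto simp: S_def)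
  have mle: "m \<le> degree G" unfolding m_def by (rule Least_le) (use ex in blast)
  obtain H where H: "H \<in> S" "degree H = m"
    using LeastI_ex[of "\<lambda>k. \<exists>H\<in>S. degree H = k"] ex unfolding m_def by blast
  have minimal: "K \<in> S \<Longrightarrow> m \<le> degree K" for K
    unfolding m_def by (rule Least_le) blast
  have H0: "H \<noteq> 0" and evH: "poly (cmap H) eta = 0" using H by (auto simp: S_def)
  define r where "r = pseudo_mod (Psi p) H"
  obtain a q where aq: "a \<noteq> 0" "Polynomial.smult a (Psi p) = H * q + r"
    using pseudo_mod(1)[OF H0, of "Psi p"] unfolding r_def by blast
  have rdeg: "r = 0 \<or> degree r < degree H" using pseudo_mod(2)[OF H0, of "Psi p"] unfolding r_def by blast
  have "poly (cmap (Polynomial.smult a (Psi p))) eta = poly (cmap (H * q + r)) eta" using aq by simp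
  hence evr: "poly (cmap r) eta = 0"
    by (simp add: cmap_smult cmap_add cmap_mult eval_Psi evH)
  have r0: "r = 0"
  proof (rule ccontr)
    assume "r \<noteq> 0"
    hence "r \<in> S" using evr by (simp add: S_def)
    hence "m \<le> degree r" by (rule minimal)
    thus False using rdeg \<open>r \<noteq> 0\<close> H(2) by simp
  qed
  have eq: "Polynomial.smult a (Psi p) = H * q" using aq r0 by simp
  have "Polynomial.smult a (Psi p) = Psi p * [:a:]" by simp
  hence "Psi p dvd Polynomial.smult a (Psi p)" by (metis dvd_triv_left)
  hence "Psi p dvd H * q" unfolding eq .
  hence "Psi p dvd H \<or> Psi p dvd q" by (rule prime_elem_dvd_multD[OF prime_Psi[OF p]])
  moreover have "\<not> Psi p dvd q"
  proof
    assume "Psi p dvd q"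
    then obtain k where k: "q = Psi p * k" by (elim dvdE)
    have "[:a:] * Psi p = (H * k) * Psi p" using eq k by (simp add: algebra_simps)
    hence "[:a:] = H * k" using Psi_nz[OF p] by (metis mult_right_cancel)
    hence "degree H + degree k = 0" using aq(1) H0 by (metis degree_mult_eq degree_pCons_0 mult_zero_right pCons_eq_0_iff)
    hence "degree H = 0" by simp
    then obtain c where c: "H = [:c:]" by (metis degree_eq_zeroE)
    hence "c \<noteq> 0" using H0 by simp
    moreover have "poly (cmap H) eta = of_int c" using c by (simp add: cmap_const)
    ultimately show False using evH by simp
  qed
  ultimately have "Psi p dvd H" by simp
  hence "degree (Psi p) \<le> degree H" using H0 by (rule dvd_imp_degree_le)
  thus ?thesis using degree_Psi[OF p] H(2) mle by simp
qed

lemma sum_zeta_pow: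
  assumes "\<not> p dvd k"
  shows "(\<Sum>r<p. zeta p ^ (k * r)) = 0"
proof -
  have ne: "zeta p ^ k \<noteq> 1" using zeta_pow_eq_1[of p k] p2[OF p] assms by simp
  have "(zeta p ^ k) ^ p = 1" using zeta_p by (metis power_mult power_mult_distrib mult.commute power_one)
  hence "(\<Sum>r<p. (zeta p ^ k) ^ r) = 0" using ne by (simp add: sum_gp_strict)
  thus ?thesis by (simp add: power_mult)
qed

lemma coeff_equal:
  fixes N :: "nat \<Rightarrow> int" and B m :: int
  assumes m: "m \<noteq> 0" and eq: "of_int m * (\<Sum>r<p. of_int (N r) * zeta p ^ r) = (of_int B :: complex)"
  shows "1 \<le> r \<Longrightarrow> r < p \<Longrightarrow> N r = N (p - 1)"
proof -
  assume r: "1 \<le> r" "r < p"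
  let ?z = "zeta p"
  have pp: "p = Suc (p - 1)" using p2[OF p] by simp
  have s0: "(\<Sum>r<p. ?z ^ r) = 0" using sum_zeta_pow[of 1] p2[OF p] by simp
  have last: "?z ^ (p - 1) = - (\<Sum>r<p - 1. ?z ^ r)"
    using s0 by (subst (asm) pp) (simp add: eq_neg_iff_add_eq_0 add.commute)
  have "(\<Sum>r<p. of_int (N r) * ?z ^ r) = (\<Sum>r<p - 1. of_int (N r) * ?z ^ r) + of_int (N (p - 1)) * ?z ^ (p - 1)"
    by (subst pp) simp
  also have "\<dots> = (\<Sum>r<p - 1. of_int (N r - N (p - 1)) * ?z ^ r)"
    unfolding last by (simp add: sum_distrib_left sum_subtractf algebra_simps)
  finally have S: "(\<Sum>r<p. of_int (N r) * ?z ^ r) = (\<Sum>r<p - 1. of_int (N r - N (p - 1)) * ?z ^ r)" .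
  define G :: "int poly" where "G = (\<Sum>r<p - 1. Polynomial.monom (m * (N r - N (p - 1))) r) - [:B:]"
  have cG: "cmap G = (\<Sum>r<p - 1. Polynomial.monom (of_int (m * (N r - N (p - 1)))) r) - [:of_int B:]"
    unfolding G_def by (intro poly_eqI) (simp add: coeff_map_poly coeff_sum coeff_monom coeff_pCons split: nat.splits)
  have evG: "poly (cmap G) ?z = 0"
    using eq unfolding cG S by (simp add: poly_sum poly_monom sum_distrib_left algebra_simps)
  define G' where "G' = pcompose G [:1, 1:]"
  have c11: "cmap [:1, 1:] = [:1, 1:]" by (simp add: cmap_pCons cmap_const)
  have evG': "poly (cmap G') eta = 0"
    unfolding G'_def cmap_pcompose c11 poly_pcompose using evG by (simp add: eta_def)
  have degG: "degree G \<le> p - 2"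
    unfolding G_def
  proof (rule degree_diff_le)
    show "degree (\<Sum>r<p - 1. Polynomial.monom (m * (N r - N (p - 1))) r) \<le> p - 2"
      by (rule degree_sum_le) (auto intro: order.trans[OF degree_monom_le])
  qed simp
  have "G' = 0"
  proof (rule ccontr)
    assume "G' \<noteq> 0"
    from LI_core[OF this evG'] have "degree G' \<ge> p - 1" .
    moreover have "degree G' = degree G" by (simp add: G'_def degree_pcompose)
    ultimately show False using degG p2[OF p] by simp
  qed
  hence G0: "G = 0" unfolding G'_def by (rule pcompose_eq_0) simp
  show "N r = N (p - 1)"
  proof (cases "r = p - 1")
    case False
    hence r': "r < p - 1" using r by simp
  have "Polynomial.coeff G r = m * (N r - N (p - 1))"
    using r r' unfolding G_def by (simp add: coeff_sum coeff_monom coeff_pCons split: nat.splits)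
  hence "m * (N r - N (p - 1)) = 0" using G0 by simp
  thus "N r = N (p - 1)" using m by simp
  qed simp
qed

lemma galois_sum:
  fixes t :: "'x \<Rightarrow> nat" and X :: "'x set" and m B :: int
  assumes fin: "finite X" and m: "m \<noteq> 0"
    and eq: "of_int m * (\<Sum>x\<in>X. zeta p ^ t x) = (of_int B :: complex)"
    and j: "\<not> p dvd j"
  shows "(\<Sum>x\<in>X. zeta p ^ (j * t x)) = (\<Sum>x\<in>X. zeta p ^ t x)"
proof -
  let ?z = "zeta p"
  define N where "N r = int (card {x\<in>X. t x mod p = r})" for r
  have grp: "(\<Sum>x\<in>X. ?z ^ (k * t x)) = (\<Sum>r<p. of_int (N r) * ?z ^ (k * r))" for k
  proof -
    have "(\<Sum>x\<in>X. ?z ^ (k * t x)) = (\<Sum>x\<in>X. ?z ^ (k * (t x mod p)))"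
    proof (rule sum.cong[OF refl])
      fix x
      have "[k * t x = k * (t x mod p)] (mod p)" by (simp add: cong_def mod_mult_right_eq)
      thus "?z ^ (k * t x) = ?z ^ (k * (t x mod p))" using p2[OF p] by (intro zeta_pow_cong) auto
    qed
    also have "\<dots> = (\<Sum>r<p. \<Sum>x\<in>{x\<in>X. t x mod p = r}. ?z ^ (k * (t x mod p)))"
      by (rule sum.group[symmetric]) (use fin p2[OF p] in auto)
    also have "\<dots> = (\<Sum>r<p. \<Sum>x\<in>{x\<in>X. t x mod p = r}. ?z ^ (k * r))"
      by (intro sum.cong refl) auto
    also have "\<dots> = (\<Sum>r<p. of_int (N r) * ?z ^ (k * r))"
      by (simp add: N_def)
    finally show ?thesis .
  qed
  have eq1: "of_int m * (\<Sum>r<p. of_int (N r) * ?z ^ r) = of_int B"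
    using eq grp[of 1] by simp
  have Neq: "1 \<le> r \<Longrightarrow> r < p \<Longrightarrow> N r = N (p - 1)" for r by (rule coeff_equal[OF m eq1])
  have val: "(\<Sum>r<p. of_int (N r) * ?z ^ (k * r)) = of_int (N 0) - of_int (N (p - 1))"
    if k: "\<not> p dvd k" for k
  proof -
    have pp: "{..<p} = insert 0 {1..<p}" using p2[OF p] by auto
    have "(\<Sum>r<p. of_int (N r) * ?z ^ (k * r)) = of_int (N 0) + (\<Sum>r\<in>{1..<p}. of_int (N r) * ?z ^ (k * r))"
      by (subst pp) simp
    also have "(\<Sum>r\<in>{1..<p}. of_int (N r) * ?z ^ (k * r)) = of_int (N (p - 1)) * (\<Sum>r\<in>{1..<p}. ?z ^ (k * r))"
      by (simp add: sum_distrib_left Neq)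
    also have "(\<Sum>r\<in>{1..<p}. ?z ^ (k * r)) = (\<Sum>r<p. ?z ^ (k * r)) - 1"
      by (subst pp) simp
    also have "\<dots> = -1" using sum_zeta_pow[OF k] by simp
    finally show ?thesis by simp
  qed
  have "\<not> p dvd 1" using p2[OF p] by simp
  thus ?thesis using grp[of j] grp[of 1] val[OF j] val[of 1] by simp
qed

end


lemma three_sum:
  fixes f :: "'x \<Rightarrow> complex" and g :: "complex \<Rightarrow> complex"
  assumes fin: "finite U" and im: "f ` U \<subseteq> {0, A, -A}" and A: "A \<noteq> 0" "A \<noteq> -A" and g0: "g 0 = 0"
  shows "(\<Sum>a\<in>U. g (f a)) = of_nat (card {a\<in>U. f a = A}) * g A + of_nat (card {a\<in>U. f a = -A}) * g (-A)"
proof -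
  have "(\<Sum>a\<in>U. g (f a)) = (\<Sum>y\<in>{0, A, -A}. \<Sum>a\<in>{a\<in>U. f a = y}. g (f a))"
    by (rule sum.group[symmetric]) (use fin im in auto)
  also have "\<dots> = (\<Sum>y\<in>{0, A, -A}. of_nat (card {a\<in>U. f a = y}) * g y)"
    by (intro sum.cong refl) simp
  also have "\<dots> = of_nat (card {a\<in>U. f a = A}) * g A + of_nat (card {a\<in>U. f a = -A}) * g (-A)"
    using A g0 by (simp add: eq_commute[of 0 "-A"])
  finally show ?thesis .
qed

lemma numbers:
  fixes A :: complex and q Np Nm R p n :: nat
  assumes p: "prime p" and qn: "q = p ^ n" and q2: "q \<ge> 2"
    and Np: "Np \<ge> 1" and Nm: "Nm \<ge> 1" and R: "R \<ge> 2"
    and E1: "(of_nat Np - of_nat Nm) * A = of_nat q"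
    and E2: "(of_nat Np + of_nat Nm) * (A * cnj A) = of_nat q ^ 2"
    and E3: "(of_nat Np - of_nat Nm) * A ^ 3 = of_nat q ^ 2 * of_nat R"
  shows "(\<exists>k::nat. k > 0 \<and> cmod A = real p ^ k)
      \<and> sqrt (real q) < sqrt (real R * real q)
      \<and> sqrt (real R * real q) = cmod A
      \<and> cmod A < real q"
proof -
  define k :: int where "k = int Np - int Nm"
  have E1': "of_int k * A = of_nat q" using E1 by (simp add: k_def)
  have k0: "k \<noteq> 0" using E1' q2 by (auto)
  define a :: real where "a = real q / real_of_int k"
  have Aa: "A = complex_of_real a"
    using E1' k0 by (simp add: a_def field_simps)
  have E3': "of_int k * A ^ 3 = of_nat q ^ 2 * of_nat R" using E3 by (simp add: k_def)
  have "of_int k * A ^ 3 = (of_int k * A) * A ^ 2" by (simp add: power3_eq_cube power2_eq_square algebra_simps)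
  hence "of_nat q * A ^ 2 = of_nat q ^ 2 * of_nat R" using E3' E1' by simp
  hence "A ^ 2 = of_nat q * of_nat R" using q2 by (simp add: power2_eq_square)
  hence a2: "a ^ 2 = real q * real R" unfolding Aa by (metis of_real_eq_iff of_real_mult of_real_of_nat_eq of_real_power)
  have "complex_of_real ((of_nat Np + of_nat Nm) * (a * a)) = complex_of_real (of_nat q ^ 2)"
    using E2 unfolding Aa by simp
  hence "(of_nat Np + of_nat Nm) * (a * a) = (of_nat q ^ 2 :: real)"
    by (simp only: of_real_eq_iff)
  hence "(real Np + real Nm) * (real q * real R) = real q ^ 2" using a2 by (simp add: power2_eq_square)
  hence NR: "(real Np + real Nm) * real R = real q" using q2 by (simp add: power2_eq_square)
  have "a * real_of_int k = real q" using k0 by (simp add: a_def)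
  hence "a ^ 2 * real_of_int k ^ 2 = real q ^ 2" by (metis power_mult_distrib)
  hence "real q * real R * real_of_int k ^ 2 = real q ^ 2" using a2 by simp
  hence qk: "real R * real_of_int k ^ 2 = real q" using q2 by (simp add: power2_eq_square)
  have "(real Np + real Nm) * real R = real_of_int k ^ 2 * real R" using NR qk by (simp add: mult.commute)
  hence Nk: "real Np + real Nm = real_of_int k ^ 2" using R by simp
  define K where "K = nat \<bar>k\<bar>"
  have K2: "real K ^ 2 = real_of_int k ^ 2" by (simp add: K_def)
  have KR: "K ^ 2 * R = q"
  proof -
    have "real (K ^ 2 * R) = real q" using qk K2 by (simp add: mult.commute)
    thus ?thesis by (simp only: of_nat_eq_iff)
  qed
  have "real K ^ 2 \<ge> 2" using Nk K2 Np Nm by simp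
  hence Kge: "K \<ge> 2"
  proof -
    assume h: "real K ^ 2 \<ge> 2"
    show "K \<ge> 2"
    proof (rule ccontr)
      assume "\<not> K \<ge> 2" hence "K \<le> 1" by simp
      hence "real K ^ 2 \<le> 1" by (simp add: power_le_one)
      thus False using h by simp
    qed
  qed
  have "K dvd p ^ n" using KR qn by (metis dvd_mult2 dvd_triv_left power2_eq_square)
  then obtain i where i: "i \<le> n" "K = p ^ i" using divides_primepow_nat[OF p] by blast
  have p1: "p > 1" using p prime_gt_1_nat by blast
  have i1: "i \<ge> 1" using i Kge by (cases i) auto
  have "K ^ 2 < q" using KR R by (metis Kge less_le_trans mult_le_cancel1 nat_mult_1_right not_less one_less_numeral_iff semiring_norm(76) zero_less_numeral power2_nat_le_imp_le Suc_1 le_refl less_imp_le_nat mult_less_cancel1 one_le_numeral pos2)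
  hence "p ^ (2 * i) < p ^ n" using i qn by (simp add: power_mult mult.commute)
  hence "2 * i < n" using p1 by (simp add: power_strict_increasing_iff)
  hence "i < n" by simp
  have absa: "\<bar>a\<bar> = real q / real K"
    by (simp add: a_def K_def abs_divide)
  have "real q / real K = real p ^ (n - i)"
  proof -
    have "real q = real p ^ (n - i) * real p ^ i" using qn i(1)
      by (simp flip: power_add)
    thus ?thesis using i(2) p1 by simp
  qed
  hence cA: "cmod A = real p ^ (n - i)" using absa Aa by simp
  have s1: "sqrt (real R * real q) = cmod A"
  proof -
    have "cmod A = \<bar>a\<bar>" by (simp add: Aa)
    also have "\<bar>a\<bar> = sqrt (a ^ 2)" by simp
    finally show ?thesis using a2 by (simp add: mult.commute)
  qed
  have s2: "sqrt (real q) < sqrt (real R * real q)" using R q2 by simp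
  have s3: "cmod A < real q"
  proof -
    have "real q / real K < real q" using Kge q2 by (simp add: divide_less_eq)
    thus ?thesis using absa Aa by simp
  qed
  show ?thesis using cA \<open>i < n\<close> s1 s2 s3 by (intro conjI exI[of _ "n - i"]) auto
qed

theorem proposition2p4:
  fixes d :: nat and A :: complex
  assumes "coprime d (CARD('a::{finite,field}) - 1)"
    and "(weil_sum d :: 'a \<Rightarrow> complex) ` (UNIV - {0}) = {0, A, -A}"
    and "card {0, A, -A} = 3"
  shows "[d = 1] (mod (CHAR('a) - 1))
         \<and> (\<exists>k::nat. k > 0 \<and> cmod A = real CHAR('a) ^ k)
         \<and> sqrt (real CARD('a)) < sqrt (real (card {x::'a. (x + 1) ^ d - x ^ d - 1 = 0}) * real CARD('a))
         \<and> sqrt (real (card {x::'a. (x + 1) ^ d - x ^ d - 1 = 0}) * real CARD('a)) = cmod A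
         \<and> cmod A < real CARD('a)"
proof -
  note cop = assms(1) and img = assms(2) and c3 = assms(3)
  define U where "U = (UNIV - {0} :: 'a set)"
  define W where "W = (weil_sum d :: 'a \<Rightarrow> complex)"
  have imgU: "W ` U = {0, A, -A}" using img by (simp add: U_def W_def)
  have A0: "A \<noteq> 0"
  proof
    assume "A = 0" hence "{0, A, -A} = {0::complex}" by simp
    thus False using c3 by simp
  qed
  have AA: "A \<noteq> -A"
  proof
    assume "A = -A" hence "{0, A, -A} = {0, A}" by auto
    hence "card {0, A, -A} \<le> 2" by (simp add: card_insert_if)
    thus False using c3 by simp
  qed
  have q2: "CARD('a) \<ge> 2" by (rule card_ge2)
  have d0: "d > 0"
  proof (rule ccontr)
    assume "\<not> d > 0" hence "d = 0" by simp
    hence "CARD('a) - 1 = 1" using cop by simp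
    hence "card U = 1" by (simp add: U_def card_Diff_subset)
    hence "card (W ` U) \<le> 1" using card_image_le[of U W] by simp
    thus False using imgU c3 by simp
  qed
  have hneg: "(-1::'a) ^ d = -1"
  proof (cases "CHAR('a) = 2")
    case True
    have e: "(-1::'a) = 1" by (rule uminus_CHAR_2[OF True])
    show ?thesis by (subst (1 2) e) (rule power_one)
  next
    case False
    moreover have "CHAR('a) \<ge> 2" using char_prime[where 'a='a] prime_ge_2_nat by blast
    ultimately have "odd (CHAR('a))" using char_prime[where 'a='a] prime_odd_nat by simp
    hence "odd (CARD('a))" using ext_degree[where 'a='a] by simp
    hence ev: "even (CARD('a) - 1)" using q2 by simp
    have "odd d"
    proof
      assume "even d"
      hence "is_unit (2::nat)" using coprime_common_divisor[OF cop _ ev] by blast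
      thus False by simp
    qed
    thus ?thesis by simp
  qed
  define Np where "Np = card {a\<in>U. W a = A}"
  define Nm where "Nm = card {a\<in>U. W a = -A}"
  have im: "W ` U \<subseteq> {0, A, -A}" using imgU by simp
  have Np1: "Np \<ge> 1"
  proof -
    have "A \<in> W ` U" using imgU by simp
    then obtain a where "a \<in> U" "W a = A" by blast
    hence "{a\<in>U. W a = A} \<noteq> {}" by blast
    thus ?thesis unfolding Np_def by (simp add: Suc_le_eq card_gt_0_iff)
  qed
  have Nm1: "Nm \<ge> 1"
  proof -
    have "-A \<in> W ` U" using imgU by simp
    then obtain a where "a \<in> U" "W a = -A" by (metis imageE)
    hence "{a\<in>U. W a = -A} \<noteq> {}" by blast
    thus ?thesis unfolding Nm_def by (simp add: Suc_le_eq card_gt_0_iff)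
  qed
  have W0: "W 0 = 0" unfolding W_def by (rule weil_0[OF d0 cop])
  have splitU: "(\<Sum>a\<in>UNIV. g (W a)) = g (W 0) + (\<Sum>a\<in>U. g (W a))" for g :: "complex \<Rightarrow> complex"
    unfolding U_def by (simp add: sum.remove)
  have fin: "finite U" by simp
  have E1: "(of_nat Np - of_nat Nm) * A = of_nat CARD('a)"
  proof -
    have "(\<Sum>a\<in>U. W a) = of_nat CARD('a)"
      using splitU[of "\<lambda>w. w"] moment1[OF d0, where 'a='a] W0 by (simp add: W_def)
    moreover have "(\<Sum>a\<in>U. W a) = of_nat Np * A + of_nat Nm * (-A)"
      using three_sum[OF fin im A0 AA, of "\<lambda>w. w"] by (simp add: Np_def Nm_def)
    ultimately show ?thesis by (simp add: algebra_simps)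
  qed
  have E2: "(of_nat Np + of_nat Nm) * (A * cnj A) = of_nat CARD('a) ^ 2"
  proof -
    have "(\<Sum>a\<in>U. W a * cnj (W a)) = of_nat CARD('a) ^ 2"
      using splitU[of "\<lambda>w. w * cnj w"] moment2[OF d0 cop] W0 by (simp add: W_def)
    moreover have "(\<Sum>a\<in>U. W a * cnj (W a)) = of_nat Np * (A * cnj A) + of_nat Nm * ((-A) * cnj (-A))"
      using three_sum[OF fin im A0 AA, of "\<lambda>w. w * cnj w"] by (simp add: Np_def Nm_def)
    ultimately show ?thesis by (simp add: algebra_simps)
  qed
  have E3: "(of_nat Np - of_nat Nm) * A ^ 3 = of_nat CARD('a) ^ 2 * of_nat (card (RR d :: 'a set))"
  proof -
    have "(\<Sum>a\<in>U. W a ^ 3) = of_nat CARD('a) ^ 2 * of_nat (card (RR d :: 'a set))"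
      using splitU[of "\<lambda>w. w ^ 3"] moment3_value[OF d0 cop hneg] W0 by (simp add: W_def)
    moreover have "(\<Sum>a\<in>U. W a ^ 3) = of_nat Np * A ^ 3 + of_nat Nm * (-A) ^ 3"
      using three_sum[OF fin im A0 AA, of "\<lambda>w. w ^ 3"] by (simp add: Np_def Nm_def)
    ultimately show ?thesis by (simp add: algebra_simps power3_eq_cube)
  qed
  have Rge: "card (RR d :: 'a set) \<ge> 2" by (rule RR_card_ge2[OF d0 hneg])
  have num: "(\<exists>k::nat. k > 0 \<and> cmod A = real CHAR('a) ^ k)
      \<and> sqrt (real CARD('a)) < sqrt (real (card (RR d :: 'a set)) * real CARD('a))
      \<and> sqrt (real (card (RR d :: 'a set)) * real CARD('a)) = cmod A
      \<and> cmod A < real CARD('a)"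
    by (rule numbers[OF char_prime ext_degree q2 Np1 Nm1 Rge E1 E2 E3])
  define kk :: int where "kk = int Np - int Nm"
  have kA: "of_int kk * A = of_nat CARD('a)" using E1 by (simp add: kk_def)
  have kk0: "kk \<noteq> 0" using kA q2 by auto
  have WcW: "Wc d (of_nat j) a = W a" if j: "\<not> CHAR('a) dvd j" for j a
  proof -
    have c0: "(of_nat j :: 'a) \<noteq> 0" using j by (simp add: of_nat_eq_0_iff_char_dvd)
    show ?thesis
    proof (cases "a = 0")
      case True
      have "Wc d (of_nat j) a = (\<Sum>x\<in>UNIV. add_char (of_nat j * x ^ d :: 'a))"
        using True by (simp add: Wc_def)
      also have "\<dots> = (\<Sum>x\<in>UNIV. add_char (of_nat j * x :: 'a))"
        by (rule sum_pow_reindex[OF d0 cop, of "\<lambda>y. add_char (of_nat j * y)"])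
      also have "\<dots> = 0" using c0 by (simp add: psi_orth)
      finally show ?thesis using True W0 by simp
    next
      case False
      define t where "t x = trace_nat (x ^ d + a * x)" for x :: 'a
      have Wt: "W a = (\<Sum>x\<in>UNIV. zeta CHAR('a) ^ t x)"
        by (simp add: W_def weil_sum_def add_char_zeta t_def)
      have Wct: "Wc d (of_nat j) a = (\<Sum>x\<in>UNIV. zeta CHAR('a) ^ (j * t x))"
        unfolding Wc_def psi_ofnat_mult
      proof (rule sum.cong[OF refl])
        fix x :: 'a
        show "add_char (x ^ d + a * x) ^ j = zeta CHAR('a) ^ (j * t x)"
          unfolding add_char_zeta t_def by (simp add: power_mult[symmetric] mult.commute)
      qed
      have "W a \<in> {0, A, -A}" using im False by (auto simp: U_def)
      then obtain B :: int where B: "of_int kk * W a = of_int B"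
      proof (elim insertE)
        assume "W a = 0" thus ?thesis using that[of 0] by simp
      next
        assume "W a = A" thus ?thesis using that[of "int CARD('a)"] kA by simp
      next
        assume "W a = -A" thus ?thesis using that[of "- int CARD('a)"] kA by simp
      qed simp
      have kB: "of_int kk * (\<Sum>x\<in>UNIV. zeta CHAR('a) ^ t x) = of_int B" using B Wt by simp
      have "(\<Sum>x\<in>UNIV. zeta CHAR('a) ^ (j * t x)) = (\<Sum>x\<in>UNIV. zeta CHAR('a) ^ t x)"
        by (rule galois_sum[OF char_prime[where 'a='a] _ kk0 kB j]) simp
      thus ?thesis using Wt Wct by simp
    qed
  qed
  have powj: "[j ^ d = j] (mod CHAR('a))" if j: "\<not> CHAR('a) dvd j" for j
  proof -
    have "(\<Sum>a\<in>UNIV. W a * cnj (Wc d (of_nat j) a)) = (\<Sum>a\<in>UNIV. W a * cnj (W a))"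
      using WcW[OF j] by simp
    also have "\<dots> = of_nat CARD('a) ^ 2" using moment2[OF d0 cop] by (simp add: W_def)
    finally have "(\<Sum>a\<in>UNIV. W a * cnj (Wc d (of_nat j) a)) \<noteq> 0" using q2 by simp
    hence "(of_nat j :: 'a) ^ d = of_nat j"
      using moment_mixed[OF d0 cop, of "of_nat j :: 'a"] by (simp add: W_def split: if_splits)
    hence "(of_nat (j ^ d) :: 'a) = of_nat j" by simp
    thus ?thesis by (simp only: of_nat_eq_iff_cong_CHAR)
  qed
  have pp: "prime (CHAR('a))" by (rule char_prime)
  obtain g where g: "residue_primroot (CHAR('a)) g" using prime_primitive_root_exists[OF char_gt1[where 'a='a] pp] by blast
  have gg: "CHAR('a) > 0 \<and> coprime (CHAR('a)) g \<and> ord (CHAR('a)) g = totient (CHAR('a))"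
    using g by (simp only: residue_primroot_def)
  hence cg: "coprime (CHAR('a)) g" by blast
  have "ord (CHAR('a)) g = totient (CHAR('a))" using gg by blast
  also have "\<dots> = CHAR('a) - 1" by (rule totient_prime[OF pp])
  finally have og: "ord (CHAR('a)) g = CHAR('a) - 1" .
  have ndg: "\<not> CHAR('a) dvd g"
  proof
    assume "CHAR('a) dvd g"
    hence "is_unit (CHAR('a))" by (rule coprime_common_divisor[OF cg dvd_refl])
    thus False using not_prime_unit pp by blast
  qed
  have gd: "g ^ d = g * g ^ (d - 1)" using d0 by (cases d) simp_all
  have "[g * g ^ (d - 1) = g * 1] (mod CHAR('a))"
    using powj[OF ndg] unfolding gd by simp
  hence "[g ^ (d - 1) = 1] (mod CHAR('a))"
    using cg by (subst (asm) cong_mult_lcancel_nat) (simp_all add: coprime_commute)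
  hence "ord (CHAR('a)) g dvd d - 1" by (simp only: ord_divides)
  hence "CHAR('a) - 1 dvd d - 1" using og by simp
  hence cong: "[d = 1] (mod (CHAR('a) - 1))" using d0 by (simp add: cong_altdef_nat)
  show ?thesis using num[unfolded RR_def] cong by blast
qed


end
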